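(* Let $U$ and $X$ be compact metric spaces, let $T:U\to U$ be a surjective map (not necessarily continuous), and let $g:U\times X\to X$ be a continuous driven system that is SI-invertible and has the unique solution property (USP). Let $h:\overleftarrow{U}\to X$ be the map defined below, let $r:\overleftarrow U\to\overleftarrow U$ be the shift $r(\ldots,u_{-3},u_{-2},u_{-1})=(\ldots,u_{-3},u_{-2})$, and set $H_2(\overleftarrow u):=(h(r\overleftarrow u),h(\overleftarrow u))$. Let $(\widehat U_T,\widehat T)$ be the inverse-limit system of $(U,T)$, $Y_T$ the relation induced by $(U,T)$, and $G_T:Y_T\to Y_T$ the map $(x_{n-1},x_n)\mapsto(x_n,x_{n+1})$ (for solutions driven by orbits of $T$). Then: (i) $H_2$ restricted to $\widehat U_T$ is a continuous surjection onto $Y_T$ satisfying $H_2\circ\widehat T=G_T\circ H_2$ on $\widehat U_T$; in particular $(Y_T,G_T)$ is topologically semi-conjugate to $(\widehat U_T,\widehat T)$. (ii) If moreover $T:U\to U$ is a homeomorphism, then $H_2|_{\widehat U_T}:\widehat U_T\to Y_T$ is a homeomorphism, so $(Y_T,G_T)$ is topologically conjugate to $(\widehat U_T,\widehat T)$ (and hence to $(U,T)$), and $g$ causally embeds $(U,T)$.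
   Context: An orbit of $T$ is a bi-infinite sequence $\{u_n\}_{n\in\mathbb Z}\subset U$ with $u_{n+1}=Tu_n$ for all $n$. A driven system is a continuous map $g:U\times X\to X$; a solution of $g$ for an input $\bar u=\{u_n\}_{n\in\mathbb Z}\subset U$ is a sequence $\{x_n\}_{n\in\mathbb Z}\subset X$ with $x_{n+1}=g(u_n,x_n)$ for all $n$ (by compactness at least one exists). $g$ is SI-invertible if $g(\cdot,x):U\to X$ is injective for every $x\in X$. $g$ has the unique solution property (USP) if for each input $\bar u$ there is exactly one solution. $\overleftarrow U:=\cdots\times U\times U$ denotes the set of left-infinite sequences $(\ldots,u_{-2},u_{-1})$ with the product topology. Under the USP the value $x_0$ of the unique solution depends only on the left-infinite part $(\ldots,u_{-2},u_{-1})$ of the input; $h:\overleftarrow U\to X$ is defined by $h(\ldots,u_{-2},u_{-1})=x_0$, where $\{x_n\}$ is the unique solution for any bi-infinite input extending $(\ldots,u_{-2},u_{-1})$. The reachable set $X_U$ is the set of all values $x_k$ of all solutions for all inputs. The inverse-limit space is $\widehat U_T:=\{(\ldots,u_{-2},u_{-1})\in\overleftarrow U: Tu_n=u_{n+1}\ \forall n\le -2\}$ and $\widehat T(\ldots,u_{-2},u_{-1}):=(\ldots,u_{-2},u_{-1},Tu_{-1})$ (reindexed so the last entry has index $-1$). The relation induced by $(U,T)$ is $Y_T:=\{(x_{n-1},x_n):\{x_k\}\text{ a solution of }g\text{ for some orbit of }T,\ n\in\mathbb Z\}$. A system $(V,S)$ is topologically semi-conjugate (resp. conjugate) to $(W,R)$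 if there is a continuous surjection (resp. homeomorphism) $\phi:W\to V$ with $\phi\circ R=S\circ\phi$. $g$ causally embeds $(U,T)$ if $h$ is continuous, surjective onto $X_U$, satisfies $h\circ\sigma_v=g(v,\cdot)\circ h$ for all $v\in U$ where $\sigma_v(\ldots,u_{-2},u_{-1})=(\ldots,u_{-2},u_{-1},v)$, and $H_2$ restricted to $\widehat U_T$ is a topological embedding into $X\times X$. *)

theory Defs
  imports "HOL-Analysis.Analysis"
begin

text \<open>A left-infinite sequence (..., u_{-2}, u_{-1}) is represented by s :: nat \<Rightarrow> _
  with s k = u_{-(k+1)}; the type nat \<Rightarrow> _ carries the product topology
  (instance from HOL-Analysis Function_Topology).\<close>

definition driven_system :: "'u::metric_space set \<Rightarrow> 'x::metric_space set \<Rightarrow> ('u \<Rightarrow> 'x \<Rightarrow> 'x) \<Rightarrow> bool" where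
  "driven_system U X g \<longleftrightarrow> continuous_on (U \<times> X) (\<lambda>(u, x). g u x) \<and> (\<forall>u\<in>U. \<forall>x\<in>X. g u x \<in> X)"

definition is_input :: "'u set \<Rightarrow> (int \<Rightarrow> 'u) \<Rightarrow> bool" where
  "is_input U ub \<longleftrightarrow> (\<forall>n. ub n \<in> U)"

definition is_solution :: "'x set \<Rightarrow> ('u \<Rightarrow> 'x \<Rightarrow> 'x) \<Rightarrow> (int \<Rightarrow> 'u) \<Rightarrow> (int \<Rightarrow> 'x) \<Rightarrow> bool" where
  "is_solution X g ub xb \<longleftrightarrow> (\<forall>n. xb n \<in> X) \<and> (\<forall>n. xb (n + 1) = g (ub n) (xb n))"

definition SI_invertible :: "'u set \<Rightarrow> 'x set \<Rightarrow> ('u \<Rightarrow> 'x \<Rightarrow> 'x) \<Rightarrow> bool" where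
  "SI_invertible U X g \<longleftrightarrow> (\<forall>x\<in>X. inj_on (\<lambda>u. g u x) U)"

definition USP :: "'u set \<Rightarrow> 'x set \<Rightarrow> ('u \<Rightarrow> 'x \<Rightarrow> 'x) \<Rightarrow> bool" where
  "USP U X g \<longleftrightarrow> (\<forall>ub. is_input U ub \<longrightarrow> (\<exists>!xb. is_solution X g ub xb))"

definition left_seqs :: "'u set \<Rightarrow> (nat \<Rightarrow> 'u) set" where
  "left_seqs U = {s. \<forall>k. s k \<in> U}"

definition extends_left :: "(int \<Rightarrow> 'u) \<Rightarrow> (nat \<Rightarrow> 'u) \<Rightarrow> bool" where
  "extends_left ub s \<longleftrightarrow> (\<forall>n<0. ub n = s (nat (- n - 1)))"

definition hmap :: "'u set \<Rightarrow> 'x set \<Rightarrow> ('u \<Rightarrow> 'x \<Rightarrow> 'x) \<Rightarrow> (nat \<Rightarrow> 'u) \<Rightarrow> 'x" where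
  "hmap U X g s = (THE x. \<exists>ub xb. is_input U ub \<and> extends_left ub s \<and> is_solution X g ub xb \<and> xb 0 = x)"

definition rshift :: "(nat \<Rightarrow> 'u) \<Rightarrow> (nat \<Rightarrow> 'u)" where
  "rshift s = (\<lambda>k. s (Suc k))"

definition append_right :: "'u \<Rightarrow> (nat \<Rightarrow> 'u) \<Rightarrow> (nat \<Rightarrow> 'u)" where
  "append_right v s = (\<lambda>k. case k of 0 \<Rightarrow> v | Suc j \<Rightarrow> s j)"

definition H2 :: "'u set \<Rightarrow> 'x set \<Rightarrow> ('u \<Rightarrow> 'x \<Rightarrow> 'x) \<Rightarrow> (nat \<Rightarrow> 'u) \<Rightarrow> 'x \<times> 'x" where
  "H2 U X g s = (hmap U X g (rshift s), hmap U X g s)"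

definition inv_limit :: "'u set \<Rightarrow> ('u \<Rightarrow> 'u) \<Rightarrow> (nat \<Rightarrow> 'u) set" where
  "inv_limit U T = {s. (\<forall>k. s k \<in> U) \<and> (\<forall>k. T (s (Suc k)) = s k)}"

definition inv_limit_map :: "('u \<Rightarrow> 'u) \<Rightarrow> (nat \<Rightarrow> 'u) \<Rightarrow> (nat \<Rightarrow> 'u)" where
  "inv_limit_map T s = append_right (T (s 0)) s"

definition is_orbit :: "'u set \<Rightarrow> ('u \<Rightarrow> 'u) \<Rightarrow> (int \<Rightarrow> 'u) \<Rightarrow> bool" where
  "is_orbit U T ub \<longleftrightarrow> (\<forall>n. ub n \<in> U) \<and> (\<forall>n. ub (n + 1) = T (ub n))"

definition induced_rel :: "'u set \<Rightarrow> 'x set \<Rightarrow> ('u \<Rightarrow> 'x \<Rightarrow> 'x) \<Rightarrow> ('u \<Rightarrow> 'u) \<Rightarrow> ('x \<times> 'x) set" where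
  "induced_rel U X g T = {(xb (n - 1), xb n) | ub xb n. is_orbit U T ub \<and> is_solution X g ub xb}"

definition induced_map :: "'u set \<Rightarrow> 'x set \<Rightarrow> ('u \<Rightarrow> 'x \<Rightarrow> 'x) \<Rightarrow> ('u \<Rightarrow> 'u) \<Rightarrow> 'x \<times> 'x \<Rightarrow> 'x \<times> 'x" where
  "induced_map U X g T p = (THE q. \<exists>ub xb n. is_orbit U T ub \<and> is_solution X g ub xb
       \<and> p = (xb (n - 1), xb n) \<and> q = (xb n, xb (n + 1)))"

definition reachable :: "'u set \<Rightarrow> 'x set \<Rightarrow> ('u \<Rightarrow> 'x \<Rightarrow> 'x) \<Rightarrow> 'x set" where
  "reachable U X g = {xb k | ub xb k. is_input U ub \<and> is_solution X g ub xb}"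

definition top_semiconj_via :: "'v::topological_space set \<Rightarrow> ('v \<Rightarrow> 'v) \<Rightarrow> 'w::topological_space set \<Rightarrow> ('w \<Rightarrow> 'w) \<Rightarrow> ('w \<Rightarrow> 'v) \<Rightarrow> bool" where
  "top_semiconj_via V S W R \<phi> \<longleftrightarrow> continuous_on W \<phi> \<and> \<phi> ` W = V \<and> (\<forall>w\<in>W. \<phi> (R w) = S (\<phi> w))"

definition top_conj_via :: "'v::topological_space set \<Rightarrow> ('v \<Rightarrow> 'v) \<Rightarrow> 'w::topological_space set \<Rightarrow> ('w \<Rightarrow> 'w) \<Rightarrow> ('w \<Rightarrow> 'v) \<Rightarrow> bool" where
  "top_conj_via V S W R \<phi> \<longleftrightarrow> (\<exists>\<psi>. homeomorphism W V \<phi> \<psi>) \<and> (\<forall>w\<in>W. \<phi> (R w) = S (\<phi> w))"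

definition causally_embeds :: "'u::metric_space set \<Rightarrow> 'x::metric_space set \<Rightarrow> ('u \<Rightarrow> 'x \<Rightarrow> 'x) \<Rightarrow> ('u \<Rightarrow> 'u) \<Rightarrow> bool" where
  "causally_embeds U X g T \<longleftrightarrow>
     continuous_on (left_seqs U) (hmap U X g)
   \<and> hmap U X g ` left_seqs U = reachable U X g
   \<and> (\<forall>v\<in>U. \<forall>s\<in>left_seqs U. hmap U X g (append_right v s) = g v (hmap U X g s))
   \<and> (\<exists>\<psi>. homeomorphism (inv_limit U T) (H2 U X g ` inv_limit U T) (H2 U X g) \<psi>)"

end

theory Submission
  imports Defs
begin

primrec fwd :: "('u \<Rightarrow> 'x \<Rightarrow> 'x) \<Rightarrow> (int \<Rightarrow> 'u) \<Rightarrow> 'x \<Rightarrow> nat \<Rightarrow> 'x" where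
  "fwd g ub x0 0 = x0"
| "fwd g ub x0 (Suc m) = g (ub (int m)) (fwd g ub x0 m)"

definition mksol :: "('u \<Rightarrow> 'x \<Rightarrow> 'x) \<Rightarrow> (int \<Rightarrow> 'u) \<Rightarrow> (nat \<Rightarrow> 'x) \<Rightarrow> int \<Rightarrow> 'x" where
  "mksol g ub z n = (if n \<le> 0 then z (nat (- n)) else fwd g ub (z 0) (nat n))"

lemma fwd_in:
  assumes "driven_system U X g" "is_input U ub" "x0 \<in> X"
  shows "fwd g ub x0 m \<in> X"
  using assms by (induction m) (auto simp: driven_system_def is_input_def)

lemma mksol_sol:
  assumes "driven_system U X g" "is_input U ub"
    and zX: "\<And>k. z k \<in> X" and zc: "\<And>k. z k = g (ub (- int k - 1)) (z (Suc k))"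
  shows "is_solution X g ub (mksol g ub z)"
  unfolding is_solution_def
proof (intro conjI allI)
  fix n :: int
  show "mksol g ub z n \<in> X"
    using fwd_in[OF assms(1,2) zX] zX by (simp add: mksol_def)
  show "mksol g ub z (n + 1) = g (ub n) (mksol g ub z n)"
  proof (cases "n < 0")
    case True
    define k where "k = nat (- n - 1)"
    have n: "n = - int k - 1" using True k_def by simp
    have "nat (- n) = Suc k" using n by simp
    then show ?thesis using True zc[of k] n by (simp add: mksol_def)
  next
    case False
    have "nat (n + 1) = Suc (nat n)" using False by simp
    then show ?thesis using False by (auto simp: mksol_def)
  qed
qed

lemma compact_seqs:
  fixes S :: "'a::topological_space set"
  assumes "compact S"
  shows "compact {s::nat \<Rightarrow> 'a. \<forall>k. s k \<in> S}"
proof -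
  have "compactin (product_topology (\<lambda>_. euclidean) UNIV) (PiE UNIV (\<lambda>_::nat. S))"
    using assms by (simp add: compactin_PiE)
  moreover have "PiE UNIV (\<lambda>_::nat. S) = {s. \<forall>k. s k \<in> S}"
    by (auto simp: PiE_iff)
  ultimately show ?thesis by (simp add: euclidean_product_topology)
qed

lemma funpow_in: "T ` U \<subseteq> U \<Longrightarrow> x \<in> U \<Longrightarrow> (T ^^ m) x \<in> U"
  by (induction m) auto

locale dsys =
  fixes U :: "'u::metric_space set" and X :: "'x::metric_space set" and g :: "'u \<Rightarrow> 'x \<Rightarrow> 'x"
  assumes cU: "compact U" and cX: "compact X" and ds: "driven_system U X g" and usp: "USP U X g"
begin

lemma gX: "u \<in> U \<Longrightarrow> x \<in> X \<Longrightarrow> g u x \<in> X"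
  using ds by (auto simp: driven_system_def)

definition chain :: "(nat \<Rightarrow> 'u) \<Rightarrow> (nat \<Rightarrow> 'x) \<Rightarrow> bool" where
  "chain s z \<longleftrightarrow> (\<forall>k. z k \<in> X) \<and> (\<forall>k. g (s k) (z (Suc k)) = z k)"

lemma hmap_chain:
  assumes s: "s \<in> left_seqs U" and ch: "chain s z"
  shows "hmap U X g s = z 0"
proof -
  have sU: "\<And>k. s k \<in> U" using s by (auto simp: left_seqs_def)
  have zX: "\<And>k. z k \<in> X" and zc: "\<And>k. z k = g (s k) (z (Suc k))"
    using ch by (auto simp: chain_def)
  define ub where "ub n = (if n < 0 then s (nat (- n - 1)) else s 0)" for n :: int
  have inp: "is_input U ub" using sU by (simp add: is_input_def ub_def)
  have ext: "extends_left ub s" by (simp add: extends_left_def ub_def)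
  have key: "xb' 0 = z 0" if inp': "is_input U ub'" and ext': "extends_left ub' s"
      and sol': "is_solution X g ub' xb'" for ub' xb'
  proof -
    have "z k = g (ub' (- int k - 1)) (z (Suc k))" for k
    proof -
      have e: "ub' (- int k - 1) = s k" using ext' by (simp add: extends_left_def)
      show ?thesis unfolding e by (rule zc)
    qed
    then have "is_solution X g ub' (mksol g ub' z)"
      by (rule mksol_sol[OF ds inp' zX])
    moreover have "\<exists>!xb. is_solution X g ub' xb" using usp inp' by (simp add: USP_def)
    ultimately have "xb' = mksol g ub' z" using sol' by blast
    then show ?thesis by (simp add: mksol_def)
  qed
  have "z k = g (ub (- int k - 1)) (z (Suc k))" for k
  proof -
    have e: "ub (- int k - 1) = s k" by (simp add: ub_def)
    show ?thesis unfolding e by (rule zc)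
  qed
  then have sol: "is_solution X g ub (mksol g ub z)"
    by (rule mksol_sol[OF ds inp zX])
  show ?thesis unfolding hmap_def
  proof (rule the_equality)
    show "\<exists>ub xb. is_input U ub \<and> extends_left ub s \<and> is_solution X g ub xb \<and> xb 0 = z 0"
      using inp ext sol by (intro exI[of _ ub] exI[of _ "mksol g ub z"]) (simp add: mksol_def)
  next
    fix x assume "\<exists>ub xb. is_input U ub \<and> extends_left ub s \<and> is_solution X g ub xb \<and> xb 0 = x"
    then show "x = z 0" using key by blast
  qed
qed

lemma hmap_sol:
  assumes inp: "is_input U ub" and sol: "is_solution X g ub xb"
  shows "hmap U X g (\<lambda>k. ub (m - 1 - int k)) = xb m"
proof -
  have "hmap U X g (\<lambda>k. ub (m - 1 - int k)) = (\<lambda>k. xb (m - int k)) 0"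
  proof (rule hmap_chain)
    show "(\<lambda>k. ub (m - 1 - int k)) \<in> left_seqs U"
      using inp by (auto simp: left_seqs_def is_input_def)
    show "chain (\<lambda>k. ub (m - 1 - int k)) (\<lambda>k. xb (m - int k))"
      unfolding chain_def
    proof (intro conjI allI)
      fix k
      show "xb (m - int k) \<in> X" using sol by (simp add: is_solution_def)
      have e: "xb ((m - 1 - int k) + 1) = g (ub (m - 1 - int k)) (xb (m - 1 - int k))"
        using sol unfolding is_solution_def by blast
      have q1: "(m - 1 - int k) + 1 = m - int k" and q2: "m - int (Suc k) = m - 1 - int k" by simp_all
      show "g (ub (m - 1 - int k)) (xb (m - int (Suc k))) = xb (m - int k)"
        using e unfolding q1 q2 by (rule sym)
    qed
  qed
  then show ?thesis by simp
qed

lemma chain_exists: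
  assumes s: "s \<in> left_seqs U"
  shows "\<exists>z. chain s z"
proof -
  have sU: "\<And>k. s k \<in> U" using s by (auto simp: left_seqs_def)
  define ub where "ub n = (if n < 0 then s (nat (- n - 1)) else s 0)" for n :: int
  have inp: "is_input U ub" using sU by (simp add: is_input_def ub_def)
  then obtain xb where sol: "is_solution X g ub xb" using usp by (auto simp: USP_def)
  show ?thesis
  proof (intro exI)
    show "chain s (\<lambda>k. xb (- int k))"
      unfolding chain_def
    proof (intro conjI allI)
      fix k
      show "xb (- int k) \<in> X" using sol by (simp add: is_solution_def)
      have e: "xb ((- int k - 1) + 1) = g (ub (- int k - 1)) (xb (- int k - 1))"
        using sol unfolding is_solution_def by blast
      have q1: "(- int k - 1) + 1 = - int k" and q2: "- int (Suc k) = - int k - 1"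
        and q3: "ub (- int k - 1) = s k" by (simp_all add: ub_def)
      show "g (s k) (xb (- int (Suc k))) = xb (- int k)"
        using e unfolding q1 q2 q3 by (rule sym)
    qed
  qed
qed

lemma hmap_iff:
  assumes s: "s \<in> left_seqs U"
  shows "hmap U X g s = x \<longleftrightarrow> (\<exists>z. chain s z \<and> z 0 = x)"
proof
  assume h: "hmap U X g s = x"
  obtain z where z: "chain s z" using chain_exists[OF s] by blast
  then have "z 0 = x" using hmap_chain[OF s z] h by simp
  then show "\<exists>z. chain s z \<and> z 0 = x" using z by blast
next
  assume "\<exists>z. chain s z \<and> z 0 = x"
  then obtain z where "chain s z" "z 0 = x" by blast
  then show "hmap U X g s = x" using hmap_chain[OF s] by simp
qed

lemma hmap_X: "s \<in> left_seqs U \<Longrightarrow> hmap U X g s \<in> X"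
proof -
  assume s: "s \<in> left_seqs U"
  obtain z where z: "chain s z" using chain_exists[OF s] by blast
  then show ?thesis using hmap_chain[OF s z] by (simp add: chain_def)
qed

lemma hmap_append:
  assumes s: "s \<in> left_seqs U" and v: "v \<in> U"
  shows "hmap U X g (append_right v s) = g v (hmap U X g s)"
proof -
  obtain z where z: "chain s z" using chain_exists[OF s] by blast
  have hs: "hmap U X g s = z 0" using hmap_chain[OF s z] .
  have ch: "chain (append_right v s) (\<lambda>k. case k of 0 \<Rightarrow> g v (z 0) | Suc j \<Rightarrow> z j)"
    using z v gX unfolding chain_def append_right_def by (auto split: nat.split)
  have mem: "append_right v s \<in> left_seqs U"
    using s v by (auto simp: left_seqs_def append_right_def split: nat.split)
  have "hmap U X g (append_right v s) = (\<lambda>k. case k of 0 \<Rightarrow> g v (z 0) | Suc j \<Rightarrow> z j) 0"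
    by (rule hmap_chain[OF mem ch])
  then show ?thesis using hs by simp
qed


definition Cset :: "((nat \<Rightarrow> 'u) \<times> (nat \<Rightarrow> 'x)) set" where
  "Cset = {p. fst p \<in> left_seqs U \<and> chain (fst p) (snd p)}"

lemma Cset_compact: "compact Cset"
proof -
  define K where "K = left_seqs U \<times> left_seqs X"
  have cK: "compact K" unfolding K_def left_seqs_def
    using compact_seqs[OF cU] compact_seqs[OF cX] by (rule compact_Times)
  then have clK: "closed K" by (rule compact_imp_closed)
  define f where "f k p = (snd p k, g (fst p k) (snd p (Suc k)))" for k and p :: "(nat \<Rightarrow> 'u) \<times> (nat \<Rightarrow> 'x)"
  define D where "D = {y. \<exists>x::'x. y = (x, x)}"
  have clD: "closed D" unfolding D_def by (rule closed_diagonal)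
  have gc: "continuous_on (U \<times> X) (\<lambda>(u, x). g u x)" using ds by (simp add: driven_system_def)
  have cf: "continuous_on K (f k)" for k
  proof -
    have c1: "continuous_on K (\<lambda>p. snd p k)"
      by (rule continuous_on_product_then_coordinatewise[OF continuous_on_snd[OF continuous_on_id]])
    have c2: "continuous_on K (\<lambda>p. snd p (Suc k))"
      by (rule continuous_on_product_then_coordinatewise[OF continuous_on_snd[OF continuous_on_id]])
    have c3: "continuous_on K (\<lambda>p. fst p k)"
      by (rule continuous_on_product_then_coordinatewise[OF continuous_on_fst[OF continuous_on_id]])
    have c4: "continuous_on K (\<lambda>p. (fst p k, snd p (Suc k)))"
      using c3 c2 by (rule continuous_on_Pair)
    have sub: "(\<lambda>p. (fst p k, snd p (Suc k))) ` K \<subseteq> U \<times> X"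
      by (auto simp: K_def left_seqs_def)
    have "continuous_on K (\<lambda>p. (\<lambda>(u, x). g u x) (fst p k, snd p (Suc k)))"
      by (rule continuous_on_compose2[OF gc c4 sub])
    then have "continuous_on K (\<lambda>p. g (fst p k) (snd p (Suc k)))" by simp
    then show ?thesis unfolding f_def using c1 by (intro continuous_on_Pair)
  qed
  have clk: "closed (K \<inter> f k -` D)" for k
    by (rule continuous_closed_preimage[OF cf clK clD])
  have eq: "Cset = K \<inter> (\<Inter>k. K \<inter> f k -` D)"
    by (auto simp: Cset_def K_def chain_def left_seqs_def f_def D_def)
  have "closed (\<Inter>k. K \<inter> f k -` D)" using clk by (intro closed_INT) simp
  then show ?thesis unfolding eq by (rule compact_Int_closed[OF cK])
qed

lemma hmap_cont: "continuous_on (left_seqs U) (hmap U X g)"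
proof -
  have fim: "hmap U X g \<in> left_seqs U \<rightarrow> X" using hmap_X by blast
  show ?thesis unfolding continuous_on_closed_gen[OF fim]
  proof (intro allI impI)
    fix F assume F: "closedin (top_of_set X) F"
    have clF: "closed F"
      using F compact_imp_closed[OF cX] closedin_closed_trans by blast
    have clP: "closed (UNIV \<inter> (\<lambda>p::(nat \<Rightarrow> 'u) \<times> (nat \<Rightarrow> 'x). snd p 0) -` F)"
      by (rule continuous_closed_preimage[OF _ closed_UNIV clF])
         (rule continuous_on_product_then_coordinatewise[OF continuous_on_snd[OF continuous_on_id]])
    have cP: "compact (Cset \<inter> (UNIV \<inter> (\<lambda>p. snd p 0) -` F))"
      using Cset_compact clP by (rule compact_Int_closed)
    have eq: "left_seqs U \<inter> hmap U X g -` F = fst ` (Cset \<inter> (UNIV \<inter> (\<lambda>p. snd p 0) -` F))"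
    proof (intro equalityI subsetI)
      fix s assume "s \<in> left_seqs U \<inter> hmap U X g -` F"
      then have s: "s \<in> left_seqs U" and hF: "hmap U X g s \<in> F" by auto
      obtain z where z: "chain s z" using chain_exists[OF s] by blast
      have "hmap U X g s = z 0" using hmap_chain[OF s z] .
      then have "(s, z) \<in> Cset \<inter> (UNIV \<inter> (\<lambda>p. snd p 0) -` F)"
        using s z hF by (simp add: Cset_def)
      then show "s \<in> fst ` (Cset \<inter> (UNIV \<inter> (\<lambda>p. snd p 0) -` F))"
        by (metis fst_conv image_eqI)
    next
      fix s assume "s \<in> fst ` (Cset \<inter> (UNIV \<inter> (\<lambda>p. snd p 0) -` F))"
      then obtain z where m: "(s, z) \<in> Cset" and zF: "z 0 \<in> F" by force
      then have s: "s \<in> left_seqs U" and z: "chain s z" by (auto simp: Cset_def)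
      have "hmap U X g s = z 0" using hmap_chain[OF s z] .
      then show "s \<in> left_seqs U \<inter> hmap U X g -` F" using s zF by simp
    qed
    have "compact (left_seqs U \<inter> hmap U X g -` F)"
      unfolding eq using cP by (rule compact_continuous_image[OF continuous_on_fst[OF continuous_on_id]])
    then show "closedin (top_of_set (left_seqs U)) (left_seqs U \<inter> hmap U X g -` F)"
      by (intro closed_subset) (auto intro: compact_imp_closed)
  qed
qed


lemma orbit_input: "is_orbit U T ub \<Longrightarrow> is_input U ub"
  by (simp add: is_orbit_def is_input_def)

lemma orbit_H2:
  assumes orb: "is_orbit U T ub" and sol: "is_solution X g ub xb"
  shows "(\<lambda>k. ub (n - 1 - int k)) \<in> inv_limit U T"
    and "H2 U X g (\<lambda>k. ub (n - 1 - int k)) = (xb (n - 1), xb n)"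
proof -
  have inp: "is_input U ub" using orb by (rule orbit_input)
  show "(\<lambda>k. ub (n - 1 - int k)) \<in> inv_limit U T"
    unfolding inv_limit_def
  proof (intro CollectI conjI allI)
    fix k
    show "ub (n - 1 - int k) \<in> U" using orb by (simp add: is_orbit_def)
    have e: "ub ((n - 1 - int (Suc k)) + 1) = T (ub (n - 1 - int (Suc k)))"
      using orb unfolding is_orbit_def by blast
    have q: "(n - 1 - int (Suc k)) + 1 = n - 1 - int k" by simp
    show "T (ub (n - 1 - int (Suc k))) = ub (n - 1 - int k)"
      using e unfolding q by (rule sym)
  qed
  have r: "rshift (\<lambda>k. ub (n - 1 - int k)) = (\<lambda>k. ub ((n - 1) - 1 - int k))"
    by (rule ext) (simp add: rshift_def algebra_simps)
  show "H2 U X g (\<lambda>k. ub (n - 1 - int k)) = (xb (n - 1), xb n)"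
  proof -
    have a: "hmap U X g (\<lambda>k. ub ((n - 1) - 1 - int k)) = xb (n - 1)" by (rule hmap_sol[OF inp sol])
    have b: "hmap U X g (\<lambda>k. ub (n - 1 - int k)) = xb n" by (rule hmap_sol[OF inp sol])
    show ?thesis unfolding H2_def r a b by (rule refl)
  qed
qed


lemma inv_limit_orbit:
  assumes TU: "T ` U \<subseteq> U" and s: "s \<in> inv_limit U T"
  shows "\<exists>ub xb. is_orbit U T ub \<and> is_solution X g ub xb \<and> s = (\<lambda>k. ub (0 - 1 - int k))"
proof -
  have sU: "\<And>k. s k \<in> U" and sT: "\<And>k. T (s (Suc k)) = s k"
    using s by (auto simp: inv_limit_def)
  define ub where "ub n = (if n < 0 then s (nat (- n - 1)) else (T ^^ Suc (nat n)) (s 0))" for n :: int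
  have orb: "is_orbit U T ub"
    unfolding is_orbit_def
  proof (intro conjI allI)
    fix n
    have "(T ^^ Suc (nat n)) (s 0) \<in> U" by (rule funpow_in[OF TU sU])
    then show "ub n \<in> U" using sU by (simp add: ub_def)
    show "ub (n + 1) = T (ub n)"
    proof (cases "n < -1")
      case True
      then have q: "nat (- n - 1) = Suc (nat (- (n + 1) - 1))" by simp
      show ?thesis using True unfolding ub_def by (simp add: q sT)
    next
      case False
      show ?thesis
      proof (cases "n = -1")
        case True
        then show ?thesis by (simp add: ub_def)
      next
        case False
        with \<open>\<not> n < -1\<close> have "n \<ge> 0" by simp
        then have "nat (n + 1) = Suc (nat n)" by simp
        then show ?thesis using \<open>n \<ge> 0\<close> by (simp add: ub_def)
      qed
    qed
  qed
  obtain xb where sol: "is_solution X g ub xb"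
    using usp orbit_input[OF orb] by (auto simp: USP_def)
  have "s = (\<lambda>k. ub (0 - 1 - int k))" by (rule ext) (simp add: ub_def)
  with orb sol show ?thesis by blast
qed

lemma H2_image:
  assumes TU: "T ` U \<subseteq> U"
  shows "H2 U X g ` inv_limit U T = induced_rel U X g T"
proof (intro equalityI subsetI)
  fix p assume "p \<in> H2 U X g ` inv_limit U T"
  then obtain s where s: "s \<in> inv_limit U T" and p: "p = H2 U X g s" by blast
  obtain ub xb where orb: "is_orbit U T ub" and sol: "is_solution X g ub xb"
    and se: "s = (\<lambda>k. ub (0 - 1 - int k))"
    using inv_limit_orbit[OF TU s] by blast
  have "p = (xb (0 - 1), xb 0)" unfolding p se by (rule orbit_H2(2)[OF orb sol])
  then show "p \<in> induced_rel U X g T" unfolding induced_rel_def using orb sol by blast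
next
  fix p assume "p \<in> induced_rel U X g T"
  then obtain ub xb n where orb: "is_orbit U T ub" and sol: "is_solution X g ub xb"
    and p: "p = (xb (n - 1), xb n)" unfolding induced_rel_def by blast
  show "p \<in> H2 U X g ` inv_limit U T"
    unfolding p using orbit_H2[OF orb sol, of n] by (metis image_eqI)
qed

lemma induced_map_eq:
  assumes SI: "SI_invertible U X g" and orb: "is_orbit U T ub" and sol: "is_solution X g ub xb"
  shows "induced_map U X g T (xb (n - 1), xb n) = (xb n, xb (n + 1))"
  unfolding induced_map_def
proof (rule the_equality)
  show "\<exists>ub' xb' m. is_orbit U T ub' \<and> is_solution X g ub' xb' \<and>
      (xb (n - 1), xb n) = (xb' (m - 1), xb' m) \<and> (xb n, xb (n + 1)) = (xb' m, xb' (m + 1))"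
    using orb sol by blast
next
  fix q assume "\<exists>ub' xb' m. is_orbit U T ub' \<and> is_solution X g ub' xb' \<and>
      (xb (n - 1), xb n) = (xb' (m - 1), xb' m) \<and> q = (xb' m, xb' (m + 1))"
  then obtain ub' xb' m where orb': "is_orbit U T ub'" and sol': "is_solution X g ub' xb'"
    and e1: "xb (n - 1) = xb' (m - 1)" and e2: "xb n = xb' m" and q: "q = (xb' m, xb' (m + 1))"
    by auto
  have s1: "xb ((n - 1) + 1) = g (ub (n - 1)) (xb (n - 1))" using sol unfolding is_solution_def by blast
  have s2: "xb' ((m - 1) + 1) = g (ub' (m - 1)) (xb' (m - 1))" using sol' unfolding is_solution_def by blast
  have "g (ub (n - 1)) (xb (n - 1)) = g (ub' (m - 1)) (xb (n - 1))"
    using s1 s2 e1 e2 by simp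
  moreover have "xb (n - 1) \<in> X" using sol by (simp add: is_solution_def)
  moreover have "ub (n - 1) \<in> U" "ub' (m - 1) \<in> U" using orb orb' by (auto simp: is_orbit_def)
  ultimately have u: "ub (n - 1) = ub' (m - 1)" using SI unfolding SI_invertible_def inj_on_def by blast
  have o1: "ub ((n - 1) + 1) = T (ub (n - 1))" using orb unfolding is_orbit_def by blast
  have o2: "ub' ((m - 1) + 1) = T (ub' (m - 1))" using orb' unfolding is_orbit_def by blast
  have un: "ub n = ub' m" using o1 o2 u by simp
  have "xb (n + 1) = g (ub n) (xb n)" using sol unfolding is_solution_def by blast
  moreover have "xb' (m + 1) = g (ub' m) (xb' m)" using sol' unfolding is_solution_def by blast
  ultimately have "xb (n + 1) = xb' (m + 1)" using un e2 by simp
  then show "q = (xb n, xb (n + 1))" using q e2 by simp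
qed

lemma H2_equiv:
  assumes TU: "T ` U \<subseteq> U" and SI: "SI_invertible U X g" and s: "s \<in> inv_limit U T"
  shows "H2 U X g (inv_limit_map T s) = induced_map U X g T (H2 U X g s)"
proof -
  obtain ub xb where orb: "is_orbit U T ub" and sol: "is_solution X g ub xb"
    and se: "s = (\<lambda>k. ub (0 - 1 - int k))"
    using inv_limit_orbit[OF TU s] by blast
  have o: "ub (-1 + 1) = T (ub (-1))" using orb unfolding is_orbit_def by blast
  have m: "inv_limit_map T s = (\<lambda>k. ub (1 - 1 - int k))"
  proof (rule ext)
    fix k show "inv_limit_map T s k = ub (1 - 1 - int k)"
      using o by (cases k) (simp_all add: inv_limit_map_def append_right_def se)
  qed
  have "H2 U X g (inv_limit_map T s) = (xb (1 - 1), xb 1)"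
    unfolding m by (rule orbit_H2(2)[OF orb sol])
  moreover have "H2 U X g s = (xb (0 - 1), xb 0)"
    unfolding se by (rule orbit_H2(2)[OF orb sol])
  moreover have "induced_map U X g T (xb (0 - 1), xb 0) = (xb 0, xb (0 + 1))"
    by (rule induced_map_eq[OF SI orb sol])
  ultimately show ?thesis by simp
qed

lemma inv_limit_sub: "inv_limit U T \<subseteq> left_seqs U"
  by (auto simp: inv_limit_def left_seqs_def)

lemma rshift_cont: "continuous_on S (rshift :: (nat \<Rightarrow> 'u) \<Rightarrow> _)"
  unfolding rshift_def
  by (intro continuous_on_coordinatewise_then_product)
     (rule continuous_on_subset[OF continuous_on_product_coordinates subset_UNIV])

lemma H2_cont: "continuous_on (inv_limit U T) (H2 U X g)"
proof -
  have c1: "continuous_on (inv_limit U T) (hmap U X g)"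
    by (rule continuous_on_subset[OF hmap_cont inv_limit_sub])
  have sub: "rshift ` inv_limit U T \<subseteq> left_seqs U"
    by (auto simp: inv_limit_def left_seqs_def rshift_def)
  have c2: "continuous_on (inv_limit U T) (\<lambda>s. hmap U X g (rshift s))"
    by (rule continuous_on_compose2[OF hmap_cont rshift_cont sub])
  show ?thesis unfolding H2_def using c2 c1 by (rule continuous_on_Pair)
qed

lemma left_seq_decomp: "s = append_right (s 0) (rshift s)"
  by (rule ext) (simp add: append_right_def rshift_def split: nat.split)

lemma H2_inj:
  assumes SI: "SI_invertible U X g" and Tinj: "inj_on T U"
  shows "inj_on (H2 U X g) (inv_limit U T)"
proof (rule inj_onI)
  fix s s' assume s: "s \<in> inv_limit U T" and s': "s' \<in> inv_limit U T"
    and eq: "H2 U X g s = H2 U X g s'"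
  have sl: "s \<in> left_seqs U" "s' \<in> left_seqs U" using s s' inv_limit_sub by auto
  have rl: "rshift s \<in> left_seqs U" "rshift s' \<in> left_seqs U"
    using sl by (auto simp: left_seqs_def rshift_def)
  have s0: "s 0 \<in> U" "s' 0 \<in> U" using sl by (auto simp: left_seqs_def)
  have h1: "hmap U X g (rshift s) = hmap U X g (rshift s')"
    and h2: "hmap U X g s = hmap U X g s'" using eq by (auto simp: H2_def)
  have "hmap U X g s = g (s 0) (hmap U X g (rshift s))"
    using hmap_append[OF rl(1) s0(1)] left_seq_decomp[of s] by simp
  moreover have "hmap U X g s' = g (s' 0) (hmap U X g (rshift s'))"
    using hmap_append[OF rl(2) s0(2)] left_seq_decomp[of s'] by simp
  ultimately have "g (s 0) (hmap U X g (rshift s)) = g (s' 0) (hmap U X g (rshift s))"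
    using h1 h2 by simp
  moreover have "hmap U X g (rshift s) \<in> X" using hmap_X[OF rl(1)] .
  ultimately have e0: "s 0 = s' 0" using SI s0 unfolding SI_invertible_def inj_on_def by blast
  have sT: "\<And>k. T (s (Suc k)) = s k" "\<And>k. T (s' (Suc k)) = s' k"
    and sU: "\<And>k. s k \<in> U" "\<And>k. s' k \<in> U"
    using s s' by (auto simp: inv_limit_def)
  have "s k = s' k" for k
  proof (induction k)
    case 0 then show ?case by (rule e0)
  next
    case (Suc k)
    have "T (s (Suc k)) = T (s' (Suc k))" using sT Suc by simp
    then show ?case using Tinj sU unfolding inj_on_def by blast
  qed
  then show "s = s'" by (rule ext)
qed

lemma reach_eq: "hmap U X g ` left_seqs U = reachable U X g"
proof (intro equalityI subsetI)
  fix x assume "x \<in> hmap U X g ` left_seqs U"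
  then obtain s where s: "s \<in> left_seqs U" and x: "x = hmap U X g s" by blast
  have sU: "\<And>k. s k \<in> U" using s by (auto simp: left_seqs_def)
  define ub where "ub n = (if n < 0 then s (nat (- n - 1)) else s 0)" for n :: int
  have inp: "is_input U ub" using sU by (simp add: is_input_def ub_def)
  then obtain xb where sol: "is_solution X g ub xb" using usp by (auto simp: USP_def)
  have "s = (\<lambda>k. ub (0 - 1 - int k))" by (rule ext) (simp add: ub_def)
  then have "x = xb 0" using hmap_sol[OF inp sol, of 0] x by simp
  then show "x \<in> reachable U X g" unfolding reachable_def using inp sol by blast
next
  fix x assume "x \<in> reachable U X g"
  then obtain ub xb k where inp: "is_input U ub" and sol: "is_solution X g ub xb" and x: "x = xb k"
    unfolding reachable_def by blast
  have "(\<lambda>j. ub (k - 1 - int j)) \<in> left_seqs U" using inp by (auto simp: left_seqs_def is_input_def)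
  moreover have "hmap U X g (\<lambda>j. ub (k - 1 - int j)) = x" using hmap_sol[OF inp sol] x by simp
  ultimately show "x \<in> hmap U X g ` left_seqs U" by (metis image_eqI)
qed

end


lemma funpow_cont:
  assumes c: "continuous_on U Tinv" and sub: "Tinv ` U \<subseteq> U"
  shows "continuous_on U (Tinv ^^ k)"
proof (induction k)
  case 0 then show ?case by (simp add: continuous_on_id)
next
  case (Suc k)
  have sub2: "(Tinv ^^ k) ` U \<subseteq> U" using funpow_in[OF sub] by blast
  have "continuous_on U (\<lambda>x. Tinv ((Tinv ^^ k) x))"
    by (rule continuous_on_compose2[OF c Suc.IH sub2])
  then show ?case by (simp add: comp_def)
qed

theorem theorem4:
  fixes U :: "'u::metric_space set" and X :: "'x::metric_space set"
    and T :: "'u \<Rightarrow> 'u" and g :: "'u \<Rightarrow> 'x \<Rightarrow> 'x"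
  assumes "compact U" and "compact X"
    and "T ` U = U"
    and "driven_system U X g"
    and "SI_invertible U X g"
    and "USP U X g"
  shows "top_semiconj_via (induced_rel U X g T) (induced_map U X g T)
           (inv_limit U T) (inv_limit_map T) (H2 U X g)
       \<and> ((\<exists>Tinv. homeomorphism U U T Tinv) \<longrightarrow>
           top_conj_via (induced_rel U X g T) (induced_map U X g T)
             (inv_limit U T) (inv_limit_map T) (H2 U X g)
         \<and> (\<exists>\<phi>. top_conj_via (induced_rel U X g T) (induced_map U X g T) U T \<phi>)
         \<and> causally_embeds U X g T)"
proof -
  interpret dsys U X g using assms by (unfold_locales) auto
  have TU: "T ` U \<subseteq> U" using assms(3) by simp
  have SI: "SI_invertible U X g" using assms(5) .
  have P1: "top_semiconj_via (induced_rel U X g T) (induced_map U X g T)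
           (inv_limit U T) (inv_limit_map T) (H2 U X g)"
    unfolding top_semiconj_via_def
    using H2_cont H2_image[OF TU] H2_equiv[OF TU SI] by blast
  have P2: "top_conj_via (induced_rel U X g T) (induced_map U X g T)
             (inv_limit U T) (inv_limit_map T) (H2 U X g)
         \<and> (\<exists>\<phi>. top_conj_via (induced_rel U X g T) (induced_map U X g T) U T \<phi>)
         \<and> causally_embeds U X g T" if exT: "\<exists>Tinv. homeomorphism U U T Tinv"
  proof -
    obtain Tinv where hom: "homeomorphism U U T Tinv" using exT by blast
    have h1: "\<And>x. x \<in> U \<Longrightarrow> Tinv (T x) = x" and h4: "\<And>y. y \<in> U \<Longrightarrow> T (Tinv y) = y"
      and h5: "Tinv ` U = U" and h6: "continuous_on U Tinv"
      using hom by (auto simp: homeomorphism_def)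
    have TiU: "Tinv ` U \<subseteq> U" using h5 by simp
    define e where "e u = (\<lambda>k. (Tinv ^^ k) u)" for u
    have ce: "continuous_on U e"
      unfolding e_def by (intro continuous_on_coordinatewise_then_product funpow_cont[OF h6 TiU])
    have eimg: "e ` U = inv_limit U T"
    proof (intro equalityI subsetI)
      fix s assume "s \<in> e ` U"
      then obtain u where u: "u \<in> U" and s: "s = e u" by blast
      have "(Tinv ^^ k) u \<in> U" for k by (rule funpow_in[OF TiU u])
      moreover have "T ((Tinv ^^ Suc k) u) = (Tinv ^^ k) u" for k
        using h4[OF funpow_in[OF TiU u, of k]] by simp
      ultimately show "s \<in> inv_limit U T" unfolding s e_def inv_limit_def by simp
    next
      fix s assume s: "s \<in> inv_limit U T"
      have sT: "\<And>k. T (s (Suc k)) = s k" and sU: "\<And>k. s k \<in> U"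
        using s by (auto simp: inv_limit_def)
      have "s k = (Tinv ^^ k) (s 0)" for k
      proof (induction k)
        case 0 then show ?case by simp
      next
        case (Suc k)
        have "s (Suc k) = Tinv (T (s (Suc k)))" using h1[OF sU[of "Suc k"]] by simp
        also have "\<dots> = Tinv (s k)" using sT by simp
        finally show ?case using Suc by simp
      qed
      then have "s = e (s 0)" unfolding e_def by (rule ext)
      then show "s \<in> e ` U" using sU[of 0] by blast
    qed
    have einj: "inj_on e U"
    proof (rule inj_onI)
      fix u v assume "u \<in> U" "v \<in> U" "e u = e v"
      then have "e u 0 = e v 0" by simp
      then show "u = v" by (simp add: e_def)
    qed
    have Tinj: "inj_on T U" by (rule inj_on_inverseI[where g = Tinv]) (rule h1)
    have cIL: "compact (inv_limit U T)"
      using compact_continuous_image[OF ce cU] eimg by simp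
    have Hinj: "inj_on (H2 U X g) (inv_limit U T)" by (rule H2_inj[OF SI Tinj])
    obtain \<psi> where psi: "homeomorphism (inv_limit U T) (induced_rel U X g T) (H2 U X g) \<psi>"
      using homeomorphism_compact[OF cIL H2_cont H2_image[OF TU] Hinj] by blast
    have C1: "top_conj_via (induced_rel U X g T) (induced_map U X g T)
             (inv_limit U T) (inv_limit_map T) (H2 U X g)"
      unfolding top_conj_via_def using psi H2_equiv[OF TU SI] by blast
    have eT: "e (T u) = inv_limit_map T (e u)" if u: "u \<in> U" for u
    proof (rule ext)
      fix k show "e (T u) k = inv_limit_map T (e u) k"
      proof (cases k)
        case 0 then show ?thesis by (simp add: e_def inv_limit_map_def append_right_def)
      next
        case (Suc j)
        have "(Tinv ^^ Suc j) (T u) = (Tinv ^^ j) (Tinv (T u))"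
          by (simp only: funpow_Suc_right comp_def)
        then show ?thesis using Suc h1[OF u] by (simp add: e_def inv_limit_map_def append_right_def)
      qed
    qed
    have C2: "\<exists>\<phi>. top_conj_via (induced_rel U X g T) (induced_map U X g T) U T \<phi>"
    proof (intro exI)
      have cphi: "continuous_on U (H2 U X g \<circ> e)"
        by (rule continuous_on_compose[OF ce]) (simp add: eimg H2_cont)
      have iphi: "(H2 U X g \<circ> e) ` U = induced_rel U X g T"
        unfolding image_comp[symmetric] eimg by (rule H2_image[OF TU])
      have injphi: "inj_on (H2 U X g \<circ> e) U"
        by (rule comp_inj_on[OF einj]) (simp add: eimg Hinj)
      obtain chi where "homeomorphism U (induced_rel U X g T) (H2 U X g \<circ> e) chi"
        using homeomorphism_compact[OF cU cphi iphi injphi] by blast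
      moreover have "\<forall>u\<in>U. (H2 U X g \<circ> e) (T u) = induced_map U X g T ((H2 U X g \<circ> e) u)"
      proof
        fix u assume u: "u \<in> U"
        have "e u \<in> inv_limit U T" using u eimg by blast
        then show "(H2 U X g \<circ> e) (T u) = induced_map U X g T ((H2 U X g \<circ> e) u)"
          using eT[OF u] H2_equiv[OF TU SI] by simp
      qed
      ultimately show "top_conj_via (induced_rel U X g T) (induced_map U X g T) U T (H2 U X g \<circ> e)"
        unfolding top_conj_via_def by blast
    qed
    have C3: "causally_embeds U X g T"
      unfolding causally_embeds_def
    proof (intro conjI)
      show "continuous_on (left_seqs U) (hmap U X g)" by (rule hmap_cont)
      show "hmap U X g ` left_seqs U = reachable U X g" by (rule reach_eq)
      show "\<forall>v\<in>U. \<forall>s\<in>left_seqs U. hmap U X g (append_right v s) = g v (hmap U X g s)"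
        using hmap_append by blast
      show "\<exists>\<psi>. homeomorphism (inv_limit U T) (H2 U X g ` inv_limit U T) (H2 U X g) \<psi>"
        using psi unfolding H2_image[OF TU] by blast
    qed
    show ?thesis using C1 C2 C3 by blast
  qed
  show ?thesis using P1 P2 by blast
qed

end
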